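(* Let $q$ be a prime power and $0\le k\le n$. Let $1\le j\le n$ and let $\begin{pmatrix} v_j & \cdots & v_1\\ X_j & \cdots & X_1\end{pmatrix}$ be a $(k+1)\times j$ array which occurs as the first $j$ columns (columns $j,\dots,1$) of the extended representation $\mathrm{EXT}(Y)$ of at least one $Y\in\mathcal{G}_q(n,k)$. Let $w_j=\sum_{\ell=1}^{j}v_\ell$. Then the number $N\begin{pmatrix} v_j & \cdots & v_1\\ X_j & \cdots & X_1\end{pmatrix}$ of subspaces $X\in\mathcal{G}_q(n,k)$ whose extended representation has exactly these first $j$ columns equals $\left[\begin{smallmatrix} n-j\\ k-w_j\end{smallmatrix}\right]_q$.
   Context: $\mathbb{F}_q$ is the finite field of size $q$; its elements are identified with $\mathbb{Z}_q=\{0,\dots,q-1\}$ by a fixed bijection (with $0\mapsto 0$, $1\mapsto 1$). $\mathcal{G}_q(n,k)$ is the set of all $k$-dimensional subspaces of $\mathbb{F}_q^n$. The $q$-ary Gaussian coefficient is $\left[\begin{smallmatrix} n\\ k\end{smallmatrix}\right]_q=\prod_{i=0}^{k-1}\frac{q^{n-i}-1}{q^{k-i}-1}$, with $\left[\begin{smallmatrix} n\\ 0\end{smallmatrix}\right]_q=1$ and $\left[\begin{smallmatrix} n\\ k\end{smallmatrix}\right]_q=0$ if $k>n$ or $k<0$. For $X\in\mathcal{G}_q(n,k)$, $\mathrm{RE}(X)$ is the unique $k\times n$ matrix in reduced row echelon form whose rows span $X$; its columns are labelled $X_n,\dots,X_2,X_1$ from left to right (so $X_1$ is the rightmost column). The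 identifying vector $v(X)=(v(X)_n,\dots,v(X)_1)$ is the binary vector of weight $k$ with $v(X)_i=1$ iff column $X_i$ of $\mathrm{RE}(X)$ contains the leading one (pivot) of some row. The extended representation $\mathrm{EXT}(X)$ is the $(k+1)\times n$ matrix whose top row is $v(X)$ and whose remaining $k$ rows are $\mathrm{RE}(X)$; its $i$-th column is $\binom{v(X)_i}{X_i}$, and "the first $j$ columns" means the columns indexed $1,\dots,j$ (the rightmost $j$ columns). *)

theory Defs
  imports Complex_Main
begin

(* Vectors of F^n: functions nat => 'a supported on {1..n}; coordinate i is
   the entry in column X_i (column n is leftmost, column 1 rightmost). *)
definition vecs :: "nat \<Rightarrow> (nat \<Rightarrow> 'a::field) set" where
  "vecs n = {x. \<forall>i. i \<notin> {1..n} \<longrightarrow> x i = 0}"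

definition row_span :: "nat \<Rightarrow> (nat \<Rightarrow> nat \<Rightarrow> 'a::field) \<Rightarrow> (nat \<Rightarrow> 'a) set" where
  "row_span k r = {x. \<exists>c. x = (\<lambda>i. \<Sum>t<k. c t * r t i)}"

definition lin_indep_rows :: "nat \<Rightarrow> (nat \<Rightarrow> nat \<Rightarrow> 'a::field) \<Rightarrow> bool" where
  "lin_indep_rows k r \<longleftrightarrow> (\<forall>c. (\<forall>i. (\<Sum>t<k. c t * r t i) = 0) \<longrightarrow> (\<forall>t<k. c t = 0))"

definition Grass :: "nat \<Rightarrow> nat \<Rightarrow> (nat \<Rightarrow> 'a::field) set set" where
  "Grass n k = {X. \<exists>r. (\<forall>t<k. r t \<in> vecs n) \<and> lin_indep_rows k r \<and> X = row_span k r}"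

(* position of the leading one (leftmost nonzero entry = largest index) of a row *)
definition lead :: "(nat \<Rightarrow> 'a::zero) \<Rightarrow> nat" where
  "lead x = (GREATEST i. x i \<noteq> 0)"

(* M is a k x n matrix in reduced row echelon form (rows 0..k-1 from top,
   columns labelled n..1 from left to right); entries outside are zero. *)
definition rref :: "nat \<Rightarrow> nat \<Rightarrow> (nat \<Rightarrow> nat \<Rightarrow> 'a::field) \<Rightarrow> bool" where
  "rref n k M \<longleftrightarrow>
     (\<forall>t i. (t \<ge> k \<or> i \<notin> {1..n}) \<longrightarrow> M t i = 0) \<and>
     (\<forall>t<k. \<exists>i. M t i \<noteq> 0) \<and>
     (\<forall>t<k. M t (lead (M t)) = 1) \<and>
     (\<forall>s t. s < t \<and> t < k \<longrightarrow> lead (M t) < lead (M s)) \<and>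
     (\<forall>s<k. \<forall>t<k. s \<noteq> t \<longrightarrow> M s (lead (M t)) = 0)"

definition RE :: "nat \<Rightarrow> nat \<Rightarrow> (nat \<Rightarrow> 'a::field) set \<Rightarrow> (nat \<Rightarrow> nat \<Rightarrow> 'a)" where
  "RE n k X = (THE M. rref n k M \<and> row_span k M = X)"

definition idv :: "nat \<Rightarrow> nat \<Rightarrow> (nat \<Rightarrow> 'a::field) set \<Rightarrow> nat \<Rightarrow> nat" where
  "idv n k X i = (if \<exists>t<k. lead (RE n k X t) = i then 1 else 0)"

(* EXT(X): column i is (v(X)_i, RE(X)_{0,i}, ..., RE(X)_{k-1,i}).
   "The first j columns of EXT(X) are (v, A)": *)
definition ext_first_cols ::
  "nat \<Rightarrow> nat \<Rightarrow> nat \<Rightarrow> (nat \<Rightarrow> 'a::field) set \<Rightarrow> (nat \<Rightarrow> nat) \<Rightarrow> (nat \<Rightarrow> nat \<Rightarrow> 'a) \<Rightarrow> bool" where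
  "ext_first_cols n k j X v A \<longleftrightarrow>
     (\<forall>i\<in>{1..j}. idv n k X i = v i \<and> (\<forall>t<k. RE n k X t i = A t i))"

definition qbinom :: "nat \<Rightarrow> nat \<Rightarrow> int \<Rightarrow> real" where
  "qbinom q n k = (if k < 0 \<or> k > int n then 0
     else (\<Prod>i<nat k. (real q ^ (n - i) - 1) / (real q ^ (nat k - i) - 1)))"

end

theory Submission
  imports Defs
begin



lemma lead_props:
  fixes x :: "nat \<Rightarrow> 'a::zero"
  assumes "\<forall>i>N. x i = 0" "x i \<noteq> 0"
  shows "x (lead x) \<noteq> 0" "i \<le> lead x" "lead x \<le> N"
proof -
  have b: "\<And>y. x y \<noteq> 0 \<Longrightarrow> y \<le> N" using assms(1) by (meson not_le)
  show "x (lead x) \<noteq> 0" unfolding lead_def by (rule GreatestI_nat[where P="\<lambda>i. x i \<noteq> 0", OF assms(2) b])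
  show "i \<le> lead x" unfolding lead_def by (rule Greatest_le_nat[where P="\<lambda>i. x i \<noteq> 0", OF assms(2) b])
  then show "lead x \<le> N" using b \<open>x (lead x) \<noteq> 0\<close> by blast
qed

lemma lead_eq:
  fixes x :: "nat \<Rightarrow> 'a::zero"
  assumes "x i \<noteq> 0" "\<forall>j>i. x j = 0"
  shows "lead x = i"
  unfolding lead_def by (rule Greatest_equality) (use assms in \<open>auto simp: not_less[symmetric]\<close>)

lemma rref_facts:
  assumes R: "rref n k M" and t: "t < k"
  shows "M t (lead (M t)) = 1" "1 \<le> lead (M t)" "lead (M t) \<le> n"
    "\<And>i. M t i \<noteq> 0 \<Longrightarrow> i \<le> lead (M t)"
    "\<And>i. lead (M t) < i \<Longrightarrow> M t i = 0"
    "\<And>s. s < k \<Longrightarrow> M s (lead (M t)) = (if s = t then 1 else 0)"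
proof -
  have z: "\<forall>i>n. M t i = 0" using R unfolding rref_def by auto
  obtain i where i: "M t i \<noteq> 0" using R t unfolding rref_def by auto
  note lp = lead_props[OF z i]
  show "M t (lead (M t)) = 1" using R t unfolding rref_def by auto
  show "lead (M t) \<le> n" by (rule lp(3))
  show "1 \<le> lead (M t)" using lp(1) R t unfolding rref_def by (metis atLeastAtMost_iff not_less_eq_eq not_le)
  show "\<And>i. M t i \<noteq> 0 \<Longrightarrow> i \<le> lead (M t)" using lead_props[OF z] by blast
  then show "\<And>i. lead (M t) < i \<Longrightarrow> M t i = 0" by (meson not_le)
  show "\<And>s. s < k \<Longrightarrow> M s (lead (M t)) = (if s = t then 1 else 0)"
    using R t unfolding rref_def by auto
qed

lemma rref_lead_mono:
  assumes R: "rref n k M" and "s < t" "t < k"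
  shows "lead (M t) < lead (M s)"
  using assms unfolding rref_def by auto

lemma rref_lead_le:
  assumes R: "rref n k M" and "s \<le> t" "t < k"
  shows "lead (M t) \<le> lead (M s)"
  using rref_lead_mono[OF R, of s t] assms by (cases "s = t") auto

lemma rref_lead_inj:
  assumes R: "rref n k M" and "s < k" "t < k" "lead (M s) = lead (M t)"
  shows "s = t"
  using rref_lead_mono[OF R, of s t] rref_lead_mono[OF R, of t s] assms by (metis less_irrefl nat_neq_iff)

lemma rref_zero: "rref n k M \<Longrightarrow> (t \<ge> k \<or> i \<notin> {1..n}) \<Longrightarrow> M t i = 0"
  unfolding rref_def by auto

lemma row_span_iff: "x \<in> row_span k r \<longleftrightarrow> (\<exists>c. x = (\<lambda>i. \<Sum>t<k. c t * r t i))"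
  unfolding row_span_def by auto

lemma row_span_zero: "(\<lambda>i. 0) \<in> row_span k r"
  unfolding row_span_iff by (rule exI[of _ "\<lambda>_. 0"]) simp

lemma row_span_add: "x \<in> row_span k r \<Longrightarrow> y \<in> row_span k r \<Longrightarrow> (\<lambda>i. x i + y i) \<in> row_span k r"
  unfolding row_span_iff
proof (elim exE)
  fix c d assume "x = (\<lambda>i. \<Sum>t<k. c t * r t i)" "y = (\<lambda>i. \<Sum>t<k. d t * r t i)"
  then show "\<exists>e. (\<lambda>i. x i + y i) = (\<lambda>i. \<Sum>t<k. e t * r t i)"
    by (intro exI[of _ "\<lambda>t. c t + d t"]) (simp add: sum.distrib algebra_simps)
qed

lemma row_span_smult: "x \<in> row_span k r \<Longrightarrow> (\<lambda>i. a * x i) \<in> row_span k r"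
  unfolding row_span_iff
proof (elim exE)
  fix c assume "x = (\<lambda>i. \<Sum>t<k. c t * r t i)"
  then show "\<exists>e. (\<lambda>i. a * x i) = (\<lambda>i. \<Sum>t<k. e t * r t i)"
    by (intro exI[of _ "\<lambda>t. a * c t"]) (simp add: sum_distrib_left algebra_simps)
qed

lemma row_span_diff: "x \<in> row_span k r \<Longrightarrow> y \<in> row_span k r \<Longrightarrow> (\<lambda>i. x i - y i) \<in> row_span k r"
  using row_span_add[OF _ row_span_smult[of y k r "-1"], of x] by simp

lemma sum_delta_mult: "(t::nat) < k \<Longrightarrow> (\<Sum>s<k. (if s = t then 1 else 0) * (f s :: 'a::comm_ring_1)) = f t"
proof -
  assume "t < k"
  have "(\<Sum>s<k. (if s = t then 1 else 0) * f s) = (\<Sum>s<k. (if s = t then f s else 0))"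
    by (rule sum.cong) auto
  also have "\<dots> = f t" using \<open>t < k\<close> by (subst sum.delta) auto
  finally show ?thesis .
qed

lemma row_span_gen: "t < k \<Longrightarrow> r t \<in> row_span k r"
  unfolding row_span_iff
  by (intro exI[of _ "\<lambda>s. if s = t then 1 else 0"]) (simp add: sum_delta_mult)

lemma row_span_sum:
  assumes "finite S" "\<forall>x\<in>S. f x \<in> row_span k r"
  shows "(\<lambda>i. \<Sum>x\<in>S. c x * f x i) \<in> row_span k r"
  using assms
proof (induction S rule: finite_induct)
  case empty then show ?case using row_span_zero by simp
next
  case (insert a S)
  have "(\<lambda>i. c a * f a i + (\<Sum>x\<in>S. c x * f x i)) \<in> row_span k r"
    using insert by (intro row_span_add row_span_smult) auto
  then show ?case using insert by simp
qed

lemma row_span_subset: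
  assumes "\<forall>t<k. r t \<in> row_span k' r'"
  shows "row_span k r \<subseteq> row_span k' r'"
proof
  fix x assume "x \<in> row_span k r"
  then obtain c where "x = (\<lambda>i. \<Sum>t<k. c t * r t i)" unfolding row_span_iff by blast
  then show "x \<in> row_span k' r'" using row_span_sum[of "{..<k}" r k' r' c] assms by simp
qed

lemma rref_coeff:
  assumes R: "rref n k M" and x: "x = (\<lambda>i. \<Sum>t<k. c t * M t i)" and s: "s < k"
  shows "x (lead (M s)) = c s"
proof -
  have "x (lead (M s)) = (\<Sum>t<k. c t * (if t = s then 1 else 0))"
    using rref_facts(6)[OF R s] x by simp
  also have "\<dots> = c s" using s sum_delta_mult[of s k c] by (simp add: mult.commute)
  finally show ?thesis .
qed

lemma rref_span_repr:
  assumes R: "rref n k M" and x: "x \<in> row_span k M"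
  shows "x = (\<lambda>i. \<Sum>t<k. x (lead (M t)) * M t i)"
proof -
  obtain c where c: "x = (\<lambda>i. \<Sum>t<k. c t * M t i)" using x unfolding row_span_iff by blast
  have "\<forall>t<k. x (lead (M t)) = c t" using rref_coeff[OF R c] by blast
  then show ?thesis using c by (auto intro!: sum.cong)
qed




lemma rref_span_lead:
  assumes R: "rref n k M" and x: "x \<in> row_span k M" and nz: "x i0 \<noteq> 0"
  shows "\<exists>s<k. lead x = lead (M s)"
proof -
  let ?c = "\<lambda>t. x (lead (M t))"
  have xr: "x = (\<lambda>i. \<Sum>t<k. ?c t * M t i)" by (rule rref_span_repr[OF R x])
  have ex: "\<exists>t. t < k \<and> ?c t \<noteq> 0"
  proof (rule ccontr)
    assume "\<not> ?thesis"
    then have "x i0 = 0" by (subst xr) simp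
    with nz show False by simp
  qed
  define s where "s = (LEAST t. t < k \<and> ?c t \<noteq> 0)"
  have s: "s < k" "?c s \<noteq> 0" using LeastI_ex[OF ex] unfolding s_def by auto
  have bef: "\<And>t. t < s \<Longrightarrow> ?c t = 0" using not_less_Least s(1) unfolding s_def
    by (metis (mono_tags, lifting) order.strict_trans)
  have "lead x = lead (M s)"
  proof (rule lead_eq)
    show "x (lead (M s)) \<noteq> 0" using s by simp
    show "\<forall>j>lead (M s). x j = 0"
    proof (intro allI impI)
      fix j assume j: "lead (M s) < j"
      have "\<And>t. t < k \<Longrightarrow> ?c t * M t j = 0"
      proof -
        fix t assume t: "t < k"
        show "?c t * M t j = 0"
        proof (cases "t < s")
          case True then show ?thesis using bef by simp
        next
          case False
          then have "lead (M t) \<le> lead (M s)" using rref_lead_le[OF R _ t] by simp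
          then show ?thesis using rref_facts(5)[OF R t, of j] j by simp
        qed
      qed
      then have "(\<Sum>t<k. ?c t * M t j) = 0" by (intro sum.neutral) auto
      then show "x j = 0" using fun_cong[OF xr, of j] by simp
    qed
  qed
  then show ?thesis using s by blast
qed

lemma rref_lead_step:
  assumes R: "rref n k M" and R': "rref n k M'" and sub: "row_span k M' \<subseteq> row_span k M"
    and IH: "\<forall>s<t. lead (M s) = lead (M' s)" and t: "t < k"
  shows "lead (M' t) \<le> lead (M t)"
proof -
  have "M' t \<in> row_span k M" using sub row_span_gen[OF t] by blast
  moreover have "M' t (lead (M' t)) \<noteq> 0" using rref_facts(1)[OF R' t] by simp
  ultimately obtain s0 where s0: "s0 < k" "lead (M' t) = lead (M s0)"
    using rref_span_lead[OF R] by blast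
  show ?thesis
  proof (cases "s0 < t")
    case True
    then have "lead (M' t) < lead (M' s0)" using rref_lead_mono[OF R' True t] by simp
    with IH True s0 show ?thesis by simp
  next
    case False
    then show ?thesis using s0 rref_lead_le[OF R _ s0(1), of t] by simp
  qed
qed

lemma rref_unique:
  assumes R: "rref n k M" and R': "rref n k M'" and eq: "row_span k M = row_span k M'"
  shows "M = M'"
proof -
  have L: "\<forall>s<t. lead (M s) = lead (M' s)" for t
  proof (induction t)
    case 0 then show ?case by simp
  next
    case (Suc t)
    show ?case
    proof (intro allI impI)
      fix s assume "s < Suc t"
      show "lead (M s) = lead (M' s)"
      proof (cases "s < t")
        case True then show ?thesis using Suc by simp
      next
        case False
        then have st: "s = t" using \<open>s < Suc t\<close> by simp
        show ?thesis
        proof (cases "t < k")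
          case True
          have "lead (M' t) \<le> lead (M t)"
            using rref_lead_step[OF R R' _ Suc.IH True] eq by simp
          moreover have "lead (M t) \<le> lead (M' t)"
            using rref_lead_step[OF R' R _ _ True] eq Suc.IH by simp
          ultimately show ?thesis using st by simp
        next
          case False
          have "M s = (\<lambda>i. 0)" "M' s = (\<lambda>i. 0)" using rref_zero[OF R] rref_zero[OF R'] st False
            by auto
          then show ?thesis by simp
        qed
      qed
    qed
  qed
  show ?thesis
  proof (rule ext)
    fix t
    show "M t = M' t"
    proof (cases "t < k")
      case False
      then show ?thesis using rref_zero[OF R] rref_zero[OF R'] by auto
    next
      case True
      have "M' t \<in> row_span k M" using eq row_span_gen[OF True] by blast
      then have "M' t = (\<lambda>i. \<Sum>s<k. M' t (lead (M s)) * M s i)" by (rule rref_span_repr[OF R])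
      also have "\<dots> = (\<lambda>i. \<Sum>s<k. (if s = t then 1 else 0) * M s i)"
        using L[of k] rref_facts(6)[OF R'] True by (intro ext sum.cong) auto
      also have "\<dots> = M t" using True by (simp add: sum_delta_mult)
      finally show ?thesis by simp
    qed
  qed
qed

lemma rref_indep: "rref n k M \<Longrightarrow> lin_indep_rows k M"
  unfolding lin_indep_rows_def
proof (intro allI impI)
  fix c t assume R: "rref n k M" and z: "\<forall>i. (\<Sum>t<k. c t * M t i) = 0" and t: "t < k"
  have "(\<lambda>i. 0) = (\<lambda>i. \<Sum>t<k. c t * M t i)" using z by simp
  from rref_coeff[OF R this t] show "c t = 0" by simp
qed

lemma rref_Grass: assumes R: "rref n k M" shows "row_span k M \<in> Grass n k"
proof -
  have "\<forall>t<k. M t \<in> vecs n" unfolding vecs_def using rref_zero[OF R] by auto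
  then show ?thesis unfolding Grass_def using rref_indep[OF R] by auto
qed

lemma RE_rref: assumes R: "rref n k M" shows "RE n k (row_span k M) = M"
  unfolding RE_def
proof (rule the_equality)
  show "rref n k M \<and> row_span k M = row_span k M" using R by simp
  show "\<And>M'. rref n k M' \<and> row_span k M' = row_span k M \<Longrightarrow> M' = M"
    using rref_unique[OF R] by metis
qed




lemma rref_glue:
  assumes R: "rref m p M" and f1: "f (Suc m) = 1" and fz: "\<forall>i. i \<notin> {1..Suc m} \<longrightarrow> f i = 0"
    and fp: "\<forall>s<p. f (lead (M s)) = 0"
  shows "rref (Suc m) (Suc p) (\<lambda>t. if t = 0 then f else M (t - 1))" (is "rref _ _ ?N")
proof -
  have L0: "lead f = Suc m"
    by (rule lead_eq) (use f1 fz in auto)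
  have N0: "?N 0 = f" by simp
  have NS: "\<And>t. ?N (Suc t) = M t" by simp
  show ?thesis unfolding rref_def
  proof (intro conjI allI impI)
    fix t i assume a: "Suc p \<le> t \<or> i \<notin> {1..Suc m}"
    show "?N t i = 0"
    proof (cases t)
      case 0 then show ?thesis using a fz by auto
    next
      case (Suc t') then show ?thesis using a rref_zero[OF R, of t' i] by auto
    qed
  next
    fix t assume t: "t < Suc p"
    show "\<exists>i. ?N t i \<noteq> 0"
    proof (cases t)
      case 0 then show ?thesis using f1 by (intro exI[of _ "Suc m"]) simp
    next
      case (Suc t') then show ?thesis using rref_facts(1)[OF R, of t'] t by (intro exI[of _ "lead (M t')"]) simp
    qed
  next
    fix t assume t: "t < Suc p"
    show "?N t (lead (?N t)) = 1"
    proof (cases t)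
      case 0 then show ?thesis using f1 L0 by simp
    next
      case (Suc t') then show ?thesis using rref_facts(1)[OF R, of t'] t by simp
    qed
  next
    fix s t assume st: "s < t \<and> t < Suc p"
    then obtain t' where t': "t = Suc t'" "t' < p" by (cases t) auto
    show "lead (?N t) < lead (?N s)"
    proof (cases s)
      case 0 then show ?thesis using rref_facts(3)[OF R t'(2)] t' L0 by simp
    next
      case (Suc s') then show ?thesis using rref_lead_mono[OF R, of s' t'] st t' by simp
    qed
  next
    fix s assume s: "s < Suc p"
    fix t assume t: "t < Suc p" and st: "s \<noteq> t"
    show "?N s (lead (?N t)) = 0"
    proof (cases t)
      case 0
      then obtain s' where "s = Suc s'" using st by (cases s) auto
      then show ?thesis using 0 L0 rref_zero[OF R, of s' "Suc m"] by simp
    next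
      case (Suc t')
      show ?thesis
      proof (cases s)
        case 0 then show ?thesis using Suc fp t by simp
      next
        case (Suc s') then show ?thesis using \<open>t = Suc t'\<close> rref_facts(6)[OF R, of t' s'] s t st by simp
      qed
    qed
  qed
qed

lemma rref_mono_n: "rref m k M \<Longrightarrow> rref (Suc m) k M"
  unfolding rref_def by auto

lemma row_span_eqI:
  assumes "\<forall>t<k. r t \<in> row_span k' r'" "\<forall>t<k'. r' t \<in> row_span k r"
  shows "row_span k r = row_span k' r'"
  using row_span_subset assms by (metis subset_antisym)

lemma sum_invol:
  assumes "\<forall>t<k. \<sigma> t < k \<and> \<sigma> (\<sigma> t) = t"
  shows "(\<Sum>t<k. g (\<sigma> t)) = (\<Sum>t<k. (g t :: 'b::comm_monoid_add))"
  by (rule sum.reindex_bij_witness[where i=\<sigma> and j=\<sigma>]) (use assms in auto)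

lemma exists_step:
  fixes r :: "nat \<Rightarrow> nat \<Rightarrow> 'a::field"
  assumes IH: "\<And>k (r :: nat \<Rightarrow> nat \<Rightarrow> 'a). (\<forall>t<k. r t \<in> vecs m) \<Longrightarrow> lin_indep_rows k r \<Longrightarrow> \<exists>M. rref m k M \<and> row_span k M = row_span k r"
    and V: "\<forall>t<Suc k'. r t \<in> vecs (Suc m)" and I: "lin_indep_rows (Suc k') r" and a0: "r 0 (Suc m) \<noteq> 0"
  shows "\<exists>M. rref (Suc m) (Suc k') M \<and> row_span (Suc k') M = row_span (Suc k') r"
proof -
  define a where "a = r 0 (Suc m)"
  define u where "u = (\<lambda>i. r 0 i / a)"
  define r' where "r' = (\<lambda>s i. r (Suc s) i - r (Suc s) (Suc m) * u i)"
  have a: "a \<noteq> 0" using a0 a_def by simp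
  have u1: "u (Suc m) = 1" using a unfolding u_def a_def by simp
  have uz: "\<And>i. i \<notin> {1..Suc m} \<Longrightarrow> u i = 0" using V unfolding u_def vecs_def by auto
  have V': "\<forall>t<k'. r' t \<in> vecs m"
  proof (intro allI impI)
    fix t assume t: "t < k'"
    show "r' t \<in> vecs m" unfolding vecs_def
    proof (intro CollectI allI impI)
      fix i assume i: "i \<notin> {1..m}"
      show "r' t i = 0"
      proof (cases "i = Suc m")
        case True then show ?thesis using u1 unfolding r'_def by simp
      next
        case False
        then have "i \<notin> {1..Suc m}" using i by auto
        then show ?thesis using V t uz unfolding r'_def vecs_def by auto
      qed
    qed
  qed
  have I': "lin_indep_rows k' r'" unfolding lin_indep_rows_def
  proof (intro allI impI)
    fix c t assume z: "\<forall>i. (\<Sum>t<k'. c t * r' t i) = 0" and t: "t < k'"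
    define b where "b = (\<Sum>s<k'. c s * r (Suc s) (Suc m))"
    define d where "d = (\<lambda>t. if t = 0 then - b / a else c (t - 1))"
    have "\<forall>i. (\<Sum>t<Suc k'. d t * r t i) = 0"
    proof
      fix i
      have "(\<Sum>t<Suc k'. d t * r t i) = d 0 * r 0 i + (\<Sum>s<k'. c s * r (Suc s) i)"
        by (subst sum.lessThan_Suc_shift) (simp add: d_def)
      also have "\<dots> = (\<Sum>s<k'. c s * r (Suc s) i) - b * u i"
        using a by (simp add: d_def u_def)
      also have "\<dots> = (\<Sum>s<k'. c s * r' s i)"
        by (simp add: r'_def b_def right_diff_distrib sum_subtractf sum_distrib_left mult.left_commute mult.commute)
      also have "\<dots> = 0" using z by simp
      finally show "(\<Sum>t<Suc k'. d t * r t i) = 0" .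
    qed
    then have "d (Suc t) = 0" using I t unfolding lin_indep_rows_def by blast
    then show "c t = 0" by (simp add: d_def)
  qed
  obtain M' where M': "rref m k' M'" "row_span k' M' = row_span k' r'" using IH[OF V' I'] by blast
  define f where "f = (\<lambda>i. u i - (\<Sum>s<k'. u (lead (M' s)) * M' s i))"
  define M where "M = (\<lambda>t. if t = 0 then f else M' (t - 1))"
  have f1: "f (Suc m) = 1" using u1 rref_zero[OF M'(1)] unfolding f_def by simp
  have fz: "\<forall>i. i \<notin> {1..Suc m} \<longrightarrow> f i = 0" using uz rref_zero[OF M'(1)] unfolding f_def by auto
  have fp: "\<forall>s<k'. f (lead (M' s)) = 0"
  proof (intro allI impI)
    fix s assume s: "s < k'"
    have "(\<Sum>s'<k'. u (lead (M' s')) * M' s' (lead (M' s))) = (\<Sum>s'<k'. (if s' = s then 1 else 0) * u (lead (M' s')))"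
      using rref_facts(6)[OF M'(1) s] by (intro sum.cong) auto
    also have "\<dots> = u (lead (M' s))" using s by (rule sum_delta_mult)
    finally show "f (lead (M' s)) = 0" unfolding f_def by simp
  qed
  have RM: "rref (Suc m) (Suc k') M" unfolding M_def by (rule rref_glue[OF M'(1) f1 fz fp])
  have M0: "M 0 = f" and MS: "\<And>s. M (Suc s) = M' s" unfolding M_def by auto
  have ur: "u \<in> row_span (Suc k') r"
    using row_span_smult[OF row_span_gen[of 0 "Suc k'" r], of "1/a"] unfolding u_def by (simp add: field_simps)
  have r'r: "\<forall>s<k'. r' s \<in> row_span (Suc k') r"
  proof (intro allI impI)
    fix s assume s: "s < k'"
    have "(\<lambda>i. r (Suc s) i - r (Suc s) (Suc m) * u i) \<in> row_span (Suc k') r"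
      using s by (intro row_span_diff row_span_smult row_span_gen ur) auto
    then show "r' s \<in> row_span (Suc k') r" unfolding r'_def .
  qed
  have M'r: "\<forall>s<k'. M' s \<in> row_span (Suc k') r"
    using row_span_subset[OF r'r] M'(2) row_span_gen by blast
  have fr: "f \<in> row_span (Suc k') r"
    unfolding f_def by (intro row_span_diff ur row_span_sum) (use M'r in auto)
  have sub1: "\<forall>t<Suc k'. M t \<in> row_span (Suc k') r"
  proof (intro allI impI)
    fix t assume "t < Suc k'"
    then show "M t \<in> row_span (Suc k') r" using fr M'r by (cases t) (auto simp: M0 MS)
  qed
  have M'M: "\<forall>s<k'. M' s \<in> row_span (Suc k') M" using row_span_gen[of "Suc _" "Suc k'" M] MS by auto
  have r'M: "\<forall>s<k'. r' s \<in> row_span (Suc k') M"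
    using row_span_subset[OF M'M] M'(2) row_span_gen by blast
  have fM: "f \<in> row_span (Suc k') M" using row_span_gen[of 0 "Suc k'" M] M0 by simp
  have uM: "u \<in> row_span (Suc k') M"
  proof -
    have "(\<lambda>i. f i + (\<Sum>s<k'. u (lead (M' s)) * M' s i)) \<in> row_span (Suc k') M"
      by (intro row_span_add fM row_span_sum) (use M'M in auto)
    then show ?thesis unfolding f_def by simp
  qed
  have sub2: "\<forall>t<Suc k'. r t \<in> row_span (Suc k') M"
  proof (intro allI impI)
    fix t assume t: "t < Suc k'"
    show "r t \<in> row_span (Suc k') M"
    proof (cases t)
      case 0
      have "r 0 = (\<lambda>i. a * u i)" using a unfolding u_def by auto
      then show ?thesis using 0 row_span_smult[OF uM, of a] by simp
    next
      case (Suc s)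
      have "r (Suc s) = (\<lambda>i. r' s i + r (Suc s) (Suc m) * u i)" unfolding r'_def by auto
      moreover have "(\<lambda>i. r' s i + r (Suc s) (Suc m) * u i) \<in> row_span (Suc k') M"
        using Suc t r'M by (intro row_span_add row_span_smult uM) auto
      ultimately show ?thesis using Suc by simp
    qed
  qed
  show ?thesis using RM row_span_eqI[OF sub1 sub2] by blast
qed

lemma rref_exists:
  fixes r :: "nat \<Rightarrow> nat \<Rightarrow> 'a::field"
  shows "(\<forall>t<k. r t \<in> vecs n) \<Longrightarrow> lin_indep_rows k r \<Longrightarrow> \<exists>M. rref n k M \<and> row_span k M = row_span k r"
proof (induction n arbitrary: k r)
  case 0
  have rz: "\<And>t i. t < k \<Longrightarrow> r t i = 0" using 0(1) unfolding vecs_def by auto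
  have k0: "k = 0"
  proof (rule ccontr)
    assume "k \<noteq> 0"
    have "\<forall>t<k. (\<lambda>_. 1::'a) t = 0"
      using 0(2)[unfolded lin_indep_rows_def, THEN spec, of "\<lambda>_. 1"] rz by simp
    then show False using \<open>k \<noteq> 0\<close> by auto
  qed
  have "rref 0 0 (\<lambda>t i. (0::'a))" unfolding rref_def by auto
  moreover have "row_span 0 (\<lambda>t i. (0::'a)) = row_span 0 r" unfolding row_span_def by simp
  ultimately show ?case using k0 by blast
next
  case (Suc m)
  show ?case
  proof (cases "\<forall>t<k. r t (Suc m) = 0")
    case True
    have "\<forall>t<k. r t \<in> vecs m" using Suc.prems(1) True unfolding vecs_def
      by (auto simp: le_Suc_eq)
    then obtain M where "rref m k M" "row_span k M = row_span k r" using Suc.IH Suc.prems(2) by blast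
    then show ?thesis using rref_mono_n by blast
  next
    case False
    then obtain t0 where t0: "t0 < k" "r t0 (Suc m) \<noteq> 0" by blast
    then obtain k' where k': "k = Suc k'" by (cases k) auto
    define \<sigma> where "\<sigma> = (\<lambda>t. if t = 0 then t0 else if t = t0 then 0 else t)"
    have sig: "\<forall>t<k. \<sigma> t < k \<and> \<sigma> (\<sigma> t) = t" using t0 k' unfolding \<sigma>_def by auto
    define r1 where "r1 = (\<lambda>t. r (\<sigma> t))"
    have V1: "\<forall>t<Suc k'. r1 t \<in> vecs (Suc m)" using Suc.prems(1) sig k' unfolding r1_def by auto
    have I1: "lin_indep_rows (Suc k') r1" unfolding lin_indep_rows_def
    proof (intro allI impI)
      fix c t assume z: "\<forall>i. (\<Sum>t<Suc k'. c t * r1 t i) = 0" and t: "t < Suc k'"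
      have "\<forall>i. (\<Sum>t<k. c (\<sigma> t) * r t i) = 0"
      proof
        fix i
        have "(\<Sum>t<k. c (\<sigma> t) * r t i) = (\<Sum>t<k. c (\<sigma> (\<sigma> t)) * r (\<sigma> t) i)"
          using sum_invol[OF sig, of "\<lambda>t. c (\<sigma> t) * r t i"] by simp
        also have "\<dots> = (\<Sum>t<k. c t * r (\<sigma> t) i)" using sig by (intro sum.cong) auto
        finally show "(\<Sum>t<k. c (\<sigma> t) * r t i) = 0" using z k' unfolding r1_def by simp
      qed
      then have "\<forall>t<k. c (\<sigma> t) = 0"
        using Suc.prems(2)[unfolded lin_indep_rows_def, THEN spec, of "\<lambda>t. c (\<sigma> t)"] by blast
      then show "c t = 0" using sig t k' by metis
    qed
    have a1: "r1 0 (Suc m) \<noteq> 0" using t0 unfolding r1_def \<sigma>_def by simp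
    obtain M where M: "rref (Suc m) (Suc k') M" "row_span (Suc k') M = row_span (Suc k') r1"
      using exists_step[OF Suc.IH V1 I1 a1] by blast
    have "row_span k r1 = row_span k r"
    proof (rule row_span_eqI)
      show "\<forall>t<k. r1 t \<in> row_span k r" using sig row_span_gen unfolding r1_def by blast
      show "\<forall>t<k. r t \<in> row_span k r1"
      proof (intro allI impI)
        fix t assume t: "t < k"
        have "r1 (\<sigma> t) \<in> row_span k r1" using sig t row_span_gen by blast
        then show "r t \<in> row_span k r1" using sig t unfolding r1_def by simp
      qed
    qed
    then show ?thesis using M k' by auto
  qed
qed

lemma Grass_rref: "X \<in> Grass n k \<Longrightarrow> \<exists>M. rref n k M \<and> row_span k M = X"
  unfolding Grass_def using rref_exists by blast




definition supp :: "nat set \<Rightarrow> (nat \<Rightarrow> 'a::zero) set" where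
  "supp F = {f. \<forall>i. i \<notin> F \<longrightarrow> f i = 0}"

lemma card_supp:
  assumes "finite F"
  shows "finite (supp F :: (nat \<Rightarrow> 'a::{finite,zero}) set) \<and> card (supp F :: (nat \<Rightarrow> 'a) set) = card (UNIV :: 'a set) ^ card F"
  using assms
proof (induction F rule: finite_induct)
  case empty
  have "supp {} = {(\<lambda>i. 0) :: nat \<Rightarrow> 'a}" unfolding supp_def by auto
  then show ?case by simp
next
  case (insert x F)
  let ?h = "\<lambda>(c::'a, g::nat \<Rightarrow> 'a). g(x := c)"
  have eq: "supp (insert x F) = ?h ` (UNIV \<times> supp F)"
  proof
    show "supp (insert x F) \<subseteq> ?h ` (UNIV \<times> supp F)"
    proof
      fix f :: "nat \<Rightarrow> 'a" assume f: "f \<in> supp (insert x F)"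
      have "f = ?h (f x, f(x := 0))" by auto
      moreover have "f(x := 0) \<in> supp F" using f unfolding supp_def by auto
      ultimately show "f \<in> ?h ` (UNIV \<times> supp F)" by blast
    qed
    show "?h ` (UNIV \<times> supp F) \<subseteq> supp (insert x F)" unfolding supp_def by auto
  qed
  have inj: "inj_on ?h (UNIV \<times> supp F)"
  proof (rule inj_onI, clarsimp)
    fix c1 g1 c2 g2 assume g: "g1 \<in> supp F" "g2 \<in> supp F" and e: "g1(x := c1) = g2(x := c2)"
    have "g1 x = 0" "g2 x = 0" using g insert(2) unfolding supp_def by auto
    then show "c1 = c2 \<and> g1 = g2" using e by (metis fun_upd_same fun_upd_triv fun_upd_upd)
  qed
  have "card (supp (insert x F) :: (nat \<Rightarrow> 'a) set) = card (UNIV :: 'a set) * card (supp F :: (nat \<Rightarrow> 'a) set)"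
    unfolding eq using card_image[OF inj] insert by (simp add: card_cartesian_product)
  then show ?case using insert eq by simp
qed

definition glue :: "(nat \<Rightarrow> nat \<Rightarrow> 'a) \<Rightarrow> (nat \<Rightarrow> 'a) \<Rightarrow> nat \<Rightarrow> nat \<Rightarrow> 'a" where
  "glue M f = (\<lambda>t. if t = 0 then f else M (t - 1))"

lemma finite_rref: "finite {M :: nat \<Rightarrow> nat \<Rightarrow> 'a::{finite,field}. rref m p M}"
proof -
  have fs: "finite (supp {1..m} :: (nat \<Rightarrow> 'a) set)" using card_supp by blast
  have "finite {M :: nat \<Rightarrow> nat \<Rightarrow> 'a. \<forall>t. (t \<in> {..<p} \<longrightarrow> M t \<in> supp {1..m}) \<and> (t \<notin> {..<p} \<longrightarrow> M t = (\<lambda>i. 0))}"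
    by (rule finite_set_of_finite_funs) (use fs in auto)
  moreover have "{M :: nat \<Rightarrow> nat \<Rightarrow> 'a. rref m p M} \<subseteq> {M. \<forall>t. (t \<in> {..<p} \<longrightarrow> M t \<in> supp {1..m}) \<and> (t \<notin> {..<p} \<longrightarrow> M t = (\<lambda>i. 0))}"
    using rref_zero unfolding supp_def by fastforce
  ultimately show ?thesis by (rule finite_subset[rotated])
qed

lemma rref_0: "{M :: nat \<Rightarrow> nat \<Rightarrow> 'a::field. rref m 0 M} = {\<lambda>t i. 0}"
  unfolding rref_def by auto

lemma rref_0_Suc: "{M :: nat \<Rightarrow> nat \<Rightarrow> 'a::field. rref 0 (Suc p) M} = {}"
  using rref_facts(2,3)[of 0 "Suc p" _ 0] by fastforce

lemma rref_tail:
  assumes R: "rref (Suc m) (Suc p) M" and L: "lead (M 0) = Suc m"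
  shows "rref m p (\<lambda>t. M (Suc t))"
  unfolding rref_def
proof (intro conjI allI impI)
  fix t i assume a: "p \<le> t \<or> i \<notin> {1..m}"
  show "M (Suc t) i = 0"
  proof (cases "i = Suc m \<and> t < p")
    case True
    then show ?thesis using rref_facts(6)[OF R, of 0 "Suc t"] L by simp
  next
    case False
    then show ?thesis using a rref_zero[OF R, of "Suc t" i] by auto
  qed
next
  fix t assume "t < p" then show "\<exists>i. M (Suc t) i \<noteq> 0" using R unfolding rref_def by auto
next
  fix t assume "t < p" then show "M (Suc t) (lead (M (Suc t))) = 1" using R unfolding rref_def by auto
next
  fix s t assume "s < t \<and> t < p" then show "lead (M (Suc t)) < lead (M (Suc s))" using R unfolding rref_def by auto
next
  fix s t assume "s < p" "t < p" "s \<noteq> t" then show "M (Suc s) (lead (M (Suc t))) = 0" using R unfolding rref_def by auto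
qed

lemma card_free:
  assumes R: "rref m p (M :: nat \<Rightarrow> nat \<Rightarrow> 'a::field)"
  shows "card ({1..m} - (\<lambda>s. lead (M s)) ` {..<p}) = m - p"
proof -
  have sub: "(\<lambda>s. lead (M s)) ` {..<p} \<subseteq> {1..m}" using rref_facts(2,3)[OF R] by auto
  have inj: "inj_on (\<lambda>s. lead (M s)) {..<p}" using rref_lead_inj[OF R] by (auto intro: inj_onI)
  have "card ((\<lambda>s. lead (M s)) ` {..<p}) = p" using card_image[OF inj] by simp
  then show ?thesis using card_Diff_subset[OF finite_subset[OF sub] sub] by simp
qed

lemma card_rref_rec:
  "card {M :: nat \<Rightarrow> nat \<Rightarrow> 'a::{finite,field}. rref (Suc m) (Suc p) M}
   = card {M :: nat \<Rightarrow> nat \<Rightarrow> 'a. rref m (Suc p) M} + card (UNIV :: 'a set) ^ (m - p) * card {M :: nat \<Rightarrow> nat \<Rightarrow> 'a. rref m p M}"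
proof -
  let ?R = "\<lambda>m p. {M :: nat \<Rightarrow> nat \<Rightarrow> 'a. rref m p M}"
  define A1 where "A1 = {M \<in> ?R (Suc m) (Suc p). lead (M 0) = Suc m}"
  define F where "F = (\<lambda>M :: nat \<Rightarrow> nat \<Rightarrow> 'a. {1..m} - (\<lambda>s. lead (M s)) ` {..<p})"
  define h where "h = (\<lambda>(M :: nat \<Rightarrow> nat \<Rightarrow> 'a, g :: nat \<Rightarrow> 'a). glue M (g(Suc m := 1)))"
  define S where "S = (SIGMA M:?R m p. (supp (F M) :: (nat \<Rightarrow> 'a) set))"
  have split: "?R (Suc m) (Suc p) = ?R m (Suc p) \<union> A1"
  proof
    show "?R (Suc m) (Suc p) \<subseteq> ?R m (Suc p) \<union> A1"
    proof
      fix M assume M: "M \<in> ?R (Suc m) (Suc p)"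
      then have R: "rref (Suc m) (Suc p) M" by simp
      show "M \<in> ?R m (Suc p) \<union> A1"
      proof (cases "lead (M 0) = Suc m")
        case True then show ?thesis using M unfolding A1_def by simp
      next
        case False
        then have l0: "lead (M 0) \<le> m" using rref_facts(3)[OF R, of 0] by simp
        have "\<forall>t. M t (Suc m) = 0"
        proof
          fix t show "M t (Suc m) = 0"
          proof (cases "t < Suc p")
            case True
            then have "lead (M t) \<le> lead (M 0)" using rref_lead_le[OF R, of 0 t] by simp
            then show ?thesis using rref_facts(5)[OF R True, of "Suc m"] l0 by simp
          next
            case False then show ?thesis using rref_zero[OF R] by simp
          qed
        qed
        then have "rref m (Suc p) M" using R unfolding rref_def by (auto simp: le_Suc_eq)
        then show ?thesis by simp
      qed
    qed
    show "?R m (Suc p) \<union> A1 \<subseteq> ?R (Suc m) (Suc p)" using rref_mono_n unfolding A1_def by blast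
  qed
  have disj: "?R m (Suc p) \<inter> A1 = {}"
    unfolding A1_def using rref_facts(3)[of m "Suc p" _ 0] by fastforce
  have img: "A1 = h ` S"
  proof
    show "h ` S \<subseteq> A1"
    proof
      fix N assume "N \<in> h ` S"
      then obtain M g where Mg: "rref m p M" "g \<in> supp (F M)" "N = glue M (g(Suc m := 1))"
        unfolding S_def h_def by auto
      have gz: "\<And>i. i \<notin> F M \<Longrightarrow> g i = 0" using Mg(2) unfolding supp_def by auto
      have f1: "(g(Suc m := 1)) (Suc m) = 1" by simp
      have fz: "\<forall>i. i \<notin> {1..Suc m} \<longrightarrow> (g(Suc m := 1)) i = 0" using gz unfolding F_def by auto
      have fp: "\<forall>s<p. (g(Suc m := 1)) (lead (M s)) = 0"
        using gz rref_facts(3)[OF Mg(1)] unfolding F_def by fastforce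
      have RN: "rref (Suc m) (Suc p) N" using rref_glue[OF Mg(1) f1 fz fp] Mg(3) unfolding glue_def by simp
      have zz: "\<forall>j>Suc m. (g(Suc m := 1)) j = 0"
      proof (intro allI impI)
        fix j assume "Suc m < j"
        then have "j \<notin> {1..Suc m}" by simp
        then show "(g(Suc m := 1)) j = 0" using fz by blast
      qed
      have "N 0 = g(Suc m := 1)" using Mg(3) unfolding glue_def by simp
      then have "lead (N 0) = Suc m" using zz by (intro lead_eq) auto
      then show "N \<in> A1" using RN unfolding A1_def by simp
    qed
    show "A1 \<subseteq> h ` S"
    proof
      fix N assume N: "N \<in> A1"
      then have R: "rref (Suc m) (Suc p) N" and L: "lead (N 0) = Suc m" unfolding A1_def by auto
      let ?M = "\<lambda>t. N (Suc t)"
      let ?g = "(N 0)(Suc m := 0)"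
      have RM: "rref m p ?M" by (rule rref_tail[OF R L])
      have "?g \<in> supp (F ?M)" unfolding supp_def F_def
      proof (intro CollectI allI impI)
        fix i assume i: "i \<notin> {1..m} - (\<lambda>s. lead (N (Suc s))) ` {..<p}"
        show "?g i = 0"
        proof (cases "i \<in> {1..m}")
          case False then show ?thesis using rref_zero[OF R, of 0 i] by (cases "i = Suc m") auto
        next
          case True
          then obtain s where "s < p" "i = lead (N (Suc s))" using i by auto
          then show ?thesis using rref_facts(6)[OF R, of "Suc s" 0] True by auto
        qed
      qed
      moreover have "N = h (?M, ?g)"
      proof -
        have "N 0 (Suc m) = 1" using rref_facts(1)[OF R, of 0] L by simp
        then have "?g(Suc m := 1) = N 0" by auto
        then show ?thesis unfolding h_def glue_def by (auto intro!: ext)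
      qed
      ultimately show "N \<in> h ` S" unfolding S_def using RM by blast
    qed
  qed
  have inj: "inj_on h S"
  proof (rule inj_onI)
    fix x y assume x: "x \<in> S" and y: "y \<in> S" and e: "h x = h y"
    obtain M1 g1 where 1: "x = (M1, g1)" "g1 \<in> supp (F M1)" using x unfolding S_def by auto
    obtain M2 g2 where 2: "y = (M2, g2)" "g2 \<in> supp (F M2)" using y unfolding S_def by auto
    have e': "glue M1 (g1(Suc m := 1)) = glue M2 (g2(Suc m := 1))" using e 1 2 unfolding h_def by simp
    have "M1 = M2"
    proof
      fix t show "M1 t = M2 t" using fun_cong[OF e', of "Suc t"] unfolding glue_def by simp
    qed
    moreover have "g1 = g2"
    proof
      fix i
      have "g1 (Suc m) = 0" "g2 (Suc m) = 0" using 1 2 unfolding supp_def F_def by auto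
      moreover have "(g1(Suc m := 1)) i = (g2(Suc m := 1)) i" using fun_cong[OF e', of 0] unfolding glue_def by simp
      ultimately show "g1 i = g2 i" by (cases "i = Suc m") auto
    qed
    ultimately show "x = y" using 1 2 by simp
  qed
  have finR: "\<And>m p. finite (?R m p)" by (rule finite_rref)
  have "card A1 = card S" unfolding img by (rule card_image[OF inj])
  also have "\<dots> = (\<Sum>M\<in>?R m p. card (supp (F M) :: (nat \<Rightarrow> 'a) set))"
    unfolding S_def
  proof (rule card_SigmaI)
    show "finite (?R m p)" by (rule finR)
    have "\<And>F. finite F \<Longrightarrow> finite (supp F :: (nat \<Rightarrow> 'a) set)" using card_supp by blast
    then show "\<forall>M\<in>?R m p. finite (supp (F M) :: (nat \<Rightarrow> 'a) set)" unfolding F_def by simp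
  qed
  also have "\<dots> = (\<Sum>M\<in>?R m p. card (UNIV :: 'a set) ^ (m - p))"
  proof (rule sum.cong)
    fix M assume "M \<in> ?R m p"
    then have R: "rref m p M" by simp
    have "finite (F M)" unfolding F_def by simp
    then have "card (supp (F M) :: (nat \<Rightarrow> 'a) set) = card (UNIV :: 'a set) ^ card (F M)"
      using card_supp by blast
    then show "card (supp (F M) :: (nat \<Rightarrow> 'a) set) = card (UNIV :: 'a set) ^ (m - p)"
      using card_free[OF R] unfolding F_def by simp
  qed simp
  also have "\<dots> = card (UNIV :: 'a set) ^ (m - p) * card (?R m p)" by simp
  finally have cA: "card A1 = card (UNIV :: 'a set) ^ (m - p) * card (?R m p)" .
  have finA: "finite A1" using finR[of "Suc m" "Suc p"] unfolding A1_def by simp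
  show ?thesis unfolding split using card_Un_disjoint[OF finR finA disj] cA by simp
qed




definition Gq :: "real \<Rightarrow> nat \<Rightarrow> nat \<Rightarrow> real" where
  "Gq Q m p = (\<Prod>i<p. Q ^ (m - i) - 1) / (\<Prod>i<p. Q ^ (Suc i) - 1)"

lemma Gq_0: "Gq Q m 0 = 1" unfolding Gq_def by simp

lemma Gq_big: "m < p \<Longrightarrow> Gq Q m p = 0"
proof -
  assume "m < p"
  then have "(\<Prod>i<p. Q ^ (m - i) - 1) = 0" by (intro prod_zero bexI[of _ m]) auto
  then show ?thesis unfolding Gq_def by simp
qed

lemma Gq_rec:
  assumes Q: "Q > 1"
  shows "Gq Q (Suc m) (Suc p) = Gq Q m (Suc p) + Q ^ (m - p) * Gq Q m p"
proof -
  define N where "N = (\<Prod>i<p. Q ^ (m - i) - 1)"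
  define D where "D = (\<Prod>i<p. Q ^ (Suc i) - 1)"
  have pos: "\<And>i. Q ^ Suc i - 1 > 0" using Q one_less_power[OF Q, of "Suc _"] by simp
  have D: "D > 0" unfolding D_def using pos by (intro prod_pos) auto
  have e: "Q ^ Suc p - 1 > 0" using pos by blast
  have n1: "(\<Prod>i<Suc p. Q ^ (Suc m - i) - 1) = (Q ^ Suc m - 1) * N"
    unfolding N_def by (subst prod.lessThan_Suc_shift) simp
  have n2: "(\<Prod>i<Suc p. Q ^ (m - i) - 1) = N * (Q ^ (m - p) - 1)"
    unfolding N_def by simp
  have d1: "(\<Prod>i<Suc p. Q ^ Suc i - 1) = D * (Q ^ Suc p - 1)" unfolding D_def by simp
  have G1: "Gq Q (Suc m) (Suc p) = (Q ^ Suc m - 1) * N / (D * (Q ^ Suc p - 1))"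
    unfolding Gq_def n1 d1 ..
  have G2: "Gq Q m (Suc p) = N * (Q ^ (m - p) - 1) / (D * (Q ^ Suc p - 1))"
    unfolding Gq_def n2 d1 ..
  have G3: "Gq Q m p = N / D" unfolding Gq_def N_def D_def ..
  show ?thesis
  proof (cases "p \<le> m")
    case True
    have pw: "Q ^ (m - p) * Q ^ Suc p = Q ^ Suc m"
      using True by (simp add: power_add[symmetric])
    have ring: "\<And>a b N::real. (a * b - 1) * N = N * (a - 1) + a * N * (b - 1)"
      by (simp add: algebra_simps)
    have eq: "(Q ^ Suc m - 1) * N = N * (Q ^ (m - p) - 1) + Q ^ (m - p) * N * (Q ^ Suc p - 1)"
      using ring[of "Q ^ (m - p)" "Q ^ Suc p" N] unfolding pw .
    have aux: "\<And>A B C D E N::real. D \<noteq> 0 \<Longrightarrow> E \<noteq> 0 \<Longrightarrow> A * N = N * B + C * N * E \<Longrightarrow>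
        A * N / (D * E) = N * B / (D * E) + C * (N / D)"
      by (simp add: field_simps)
    show ?thesis unfolding G1 G2 G3 using aux[OF _ _ eq] D e by simp
  next
    case False
    then have "N = 0" unfolding N_def by (intro prod_zero bexI[of _ m]) auto
    then show ?thesis unfolding G1 G2 G3 by simp
  qed
qed

lemma card_UNIV_ge2: "card (UNIV :: 'a::{finite,field} set) \<ge> 2"
proof -
  have "card {0::'a, 1} \<le> card (UNIV :: 'a set)" by (rule card_mono) auto
  then show ?thesis by simp
qed

lemma card_rref_Gq:
  "real (card {M :: nat \<Rightarrow> nat \<Rightarrow> 'a::{finite,field}. rref m p M}) = Gq (real (card (UNIV :: 'a set))) m p"
proof (induction m arbitrary: p)
  case 0
  show ?case
  proof (cases p)
    case 0 then show ?thesis by (simp only: rref_0 Gq_0) simp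
  next
    case (Suc p') then show ?thesis by (simp only: rref_0_Suc Gq_big[of 0 "Suc p'"]) simp
  qed
next
  case (Suc m)
  show ?case
  proof (cases p)
    case 0 then show ?thesis by (simp only: rref_0 Gq_0) simp
  next
    case (Suc p')
    have Q: "real (card (UNIV :: 'a set)) > 1" using card_UNIV_ge2[where 'a='a] by simp
    show ?thesis unfolding Suc card_rref_rec
      using Gq_rec[OF Q, of m p'] Suc.IH[of "Suc p'"] Suc.IH[of p'] by simp
  qed
qed

lemma qbinom_Gq:
  assumes q: "q \<ge> 2"
  shows "qbinom q m (int p) = Gq (real q) m p"
proof (cases "p > m")
  case True then show ?thesis unfolding qbinom_def using Gq_big by simp
next
  case False
  have "qbinom q m (int p) = (\<Prod>i<p. (real q ^ (m - i) - 1) / (real q ^ (p - i) - 1))"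
    unfolding qbinom_def using False by simp
  also have "\<dots> = (\<Prod>i<p. real q ^ (m - i) - 1) / (\<Prod>i<p. real q ^ (p - i) - 1)"
    by (rule prod_dividef)
  also have "(\<Prod>i<p. real q ^ (p - i) - 1) = (\<Prod>i<p. real q ^ (Suc (p - Suc i)) - 1)"
    by (intro prod.cong) (auto simp: Suc_diff_Suc)
  also have "\<dots> = (\<Prod>i<p. real q ^ (Suc i) - 1)"
    by (rule prod.nat_diff_reindex[where g="\<lambda>i. real q ^ (Suc i) - 1"])
  finally show ?thesis unfolding Gq_def .
qed




definition extM :: "nat \<Rightarrow> nat \<Rightarrow> (nat \<Rightarrow> nat) \<Rightarrow> (nat \<Rightarrow> nat \<Rightarrow> 'a) \<Rightarrow> (nat \<Rightarrow> nat \<Rightarrow> 'a::zero) \<Rightarrow> bool" where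
  "extM k j v A M \<longleftrightarrow> (\<forall>i\<in>{1..j}. (if \<exists>t<k. lead (M t) = i then 1 else 0) = v i \<and> (\<forall>t<k. M t i = A t i))"

lemma down_closed:
  fixes U :: "nat set"
  assumes "finite U" "\<forall>t\<in>U. \<forall>s\<le>t. s \<in> U"
  shows "U = {..<card U}"
proof -
  have ex: "\<exists>x. x \<notin> U" using assms(1) ex_new_if_finite infinite_UNIV_nat by blast
  define m where "m = (LEAST x. x \<notin> U)"
  have mU: "m \<notin> U" unfolding m_def using LeastI_ex[OF ex] .
  have "U = {..<m}"
  proof
    show "{..<m} \<subseteq> U" using not_less_Least unfolding m_def by auto
    show "U \<subseteq> {..<m}"
    proof
      fix t assume "t \<in> U"
      then show "t \<in> {..<m}" using assms(2) mU by (metis lessThan_iff not_le)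
    qed
  qed
  then show ?thesis by simp
qed

lemma lead_split:
  assumes R: "rref n k M" and E: "extM k j v A M"
  defines "P \<equiv> {i\<in>{1..j}. v i = 1}"
  shows "card P \<le> k" "\<And>t. t < k \<Longrightarrow> (j < lead (M t) \<longleftrightarrow> t < k - card P)"
proof -
  define T where "T = {t. t < k \<and> lead (M t) \<le> j}"
  define U where "U = {t. t < k \<and> j < lead (M t)}"
  have inj: "inj_on (\<lambda>t. lead (M t)) T" using rref_lead_inj[OF R] unfolding T_def by (auto intro: inj_onI)
  have im: "(\<lambda>t. lead (M t)) ` T = P"
  proof
    show "(\<lambda>t. lead (M t)) ` T \<subseteq> P"
    proof
      fix i assume "i \<in> (\<lambda>t. lead (M t)) ` T"
      then obtain t where t: "t < k" "lead (M t) \<le> j" "i = lead (M t)" unfolding T_def by auto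
      then have "i \<in> {1..j}" using rref_facts(2)[OF R t(1)] by simp
      moreover have "(if \<exists>t<k. lead (M t) = i then 1 else 0) = v i" using E calculation unfolding extM_def by blast
      moreover have "\<exists>t'<k. lead (M t') = i" using t by blast
      ultimately show "i \<in> P" unfolding P_def by (metis (mono_tags, lifting) mem_Collect_eq)
    qed
    show "P \<subseteq> (\<lambda>t. lead (M t)) ` T"
    proof
      fix i assume i: "i \<in> P"
      then have "(if \<exists>t<k. lead (M t) = i then 1 else 0) = (1::nat)" using E unfolding extM_def P_def by auto
      then obtain t where "t < k" "lead (M t) = i" by (auto split: if_splits)
      then show "i \<in> (\<lambda>t. lead (M t)) ` T" using i unfolding T_def P_def by auto
    qed
  qed
  have cT: "card T = card P" using card_image[OF inj] im by simp
  have un: "T \<union> U = {..<k}" "T \<inter> U = {}" unfolding T_def U_def by auto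
  have fT: "finite T" "finite U" unfolding T_def U_def by auto
  have "card T + card U = k" using card_Un_disjoint[OF fT un(2)] un(1) by simp
  then have cU: "card U = k - card P" and ck: "card P \<le> k" using cT by auto
  show "card P \<le> k" by (rule ck)
  have "U = {..<card U}"
  proof (rule down_closed)
    show "finite U" unfolding U_def by simp
    show "\<forall>t\<in>U. \<forall>s\<le>t. s \<in> U" unfolding U_def using rref_lead_le[OF R] by (auto intro: less_le_trans)
  qed
  then have "U = {..<k - card P}" using cU by simp
  then show "\<And>t. t < k \<Longrightarrow> (j < lead (M t) \<longleftrightarrow> t < k - card P)" unfolding U_def by blast
qed




lemma memb_facts:
  assumes R: "rref n k M" and E: "extM k j v A M"
  defines "p \<equiv> k - card {i\<in>{1..j}. v i = 1}"
  shows "p \<le> k" "\<And>t. t < p \<Longrightarrow> j < lead (M t)" "\<And>t. p \<le> t \<Longrightarrow> t < k \<Longrightarrow> lead (M t) \<le> j"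
    "\<And>t i. p \<le> t \<Longrightarrow> j < i \<Longrightarrow> M t i = 0"
    "\<And>t i. 1 \<le> i \<Longrightarrow> i \<le> j \<Longrightarrow> t < k \<Longrightarrow> M t i = A t i"
proof -
  note ls = lead_split[OF R E]
  show pk: "p \<le> k" unfolding p_def by simp
  show a: "\<And>t. t < p \<Longrightarrow> j < lead (M t)" using ls(2) pk unfolding p_def by auto
  show b: "\<And>t. p \<le> t \<Longrightarrow> t < k \<Longrightarrow> lead (M t) \<le> j" using ls(2) unfolding p_def by (meson not_le)
  show "\<And>t i. p \<le> t \<Longrightarrow> j < i \<Longrightarrow> M t i = 0"
  proof -
    fix t i assume "p \<le> t" "j < i"
    then show "M t i = 0"
      using b[of t] rref_facts(5)[OF R, of t i] rref_zero[OF R, of t i] by (cases "t < k") auto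
  qed
  show "\<And>t i. 1 \<le> i \<Longrightarrow> i \<le> j \<Longrightarrow> t < k \<Longrightarrow> M t i = A t i" using E unfolding extM_def by auto
qed

lemma count_bij:
  fixes M0 :: "nat \<Rightarrow> nat \<Rightarrow> 'a::field"
  assumes R0: "rref n k M0" and E0: "extM k j v A M0" and j: "1 \<le> j" "j \<le> n"
  defines "p \<equiv> k - card {i\<in>{1..j}. v i = 1}"
  shows "bij_betw (\<lambda>M t i. if t < p \<and> 1 \<le> i \<and> i \<le> n - j then M t (i + j) else 0)
           {M. rref n k M \<and> extM k j v A M} {M'. rref (n - j) p M'}"
proof -
  define \<Phi> where "\<Phi> = (\<lambda>(M :: nat \<Rightarrow> nat \<Rightarrow> 'a) t i. if t < p \<and> 1 \<le> i \<and> i \<le> n - j then M t (i + j) else 0)"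
  define \<Psi> where "\<Psi> = (\<lambda>(M' :: nat \<Rightarrow> nat \<Rightarrow> 'a) t i. if t < p \<and> j < i then M' t (i - j) else M0 t i)"
  note F0 = memb_facts[OF R0 E0, folded p_def]
  have left: "\<forall>M\<in>{M :: nat \<Rightarrow> nat \<Rightarrow> 'a. rref n k M \<and> extM k j v A M}. \<Psi> (\<Phi> M) = M"
  proof
    fix M assume "M \<in> {M :: nat \<Rightarrow> nat \<Rightarrow> 'a. rref n k M \<and> extM k j v A M}"
    then have R: "rref n k M" and E: "extM k j v A M" by auto
    note F = memb_facts[OF R E, folded p_def]
    show "\<Psi> (\<Phi> M) = M"
    proof (intro ext)
      fix t i
      show "\<Psi> (\<Phi> M) t i = M t i"
      proof (cases "t < p \<and> j < i")
        case True
        have "\<not> i - j \<le> n - j \<Longrightarrow> M t i = 0"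
        proof -
          assume "\<not> i - j \<le> n - j"
          then have "\<not> i \<le> n" using j True by linarith
          then show "M t i = 0" using rref_zero[OF R, of t i] by simp
        qed
        then show ?thesis unfolding \<Psi>_def \<Phi>_def using True by auto
      next
        case False
        then have "\<Psi> (\<Phi> M) t i = M0 t i" unfolding \<Psi>_def by auto
        also have "\<dots> = M t i"
        proof (cases "t < k")
          case False then show ?thesis using rref_zero[OF R] rref_zero[OF R0] by simp
        next
          case tk: True
          show ?thesis
          proof (cases "j < i")
            case True
            then have "p \<le> t" using False by simp
            then show ?thesis using F(4) F0(4) True by simp
          next
            case False
            then show ?thesis using F(5) F0(5) tk rref_zero[OF R, of t i] rref_zero[OF R0, of t i]
              by (cases "i = 0") auto
          qed
        qed
        finally show ?thesis .
      qed
    qed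
  qed
  have right: "\<forall>M'\<in>{M' :: nat \<Rightarrow> nat \<Rightarrow> 'a. rref (n - j) p M'}. \<Phi> (\<Psi> M') = M'"
  proof
    fix M' assume "M' \<in> {M' :: nat \<Rightarrow> nat \<Rightarrow> 'a. rref (n - j) p M'}"
    then have R': "rref (n - j) p M'" by simp
    show "\<Phi> (\<Psi> M') = M'"
    proof (intro ext)
      fix t i
      show "\<Phi> (\<Psi> M') t i = M' t i"
        unfolding \<Phi>_def \<Psi>_def using rref_zero[OF R', of t i] by auto
    qed
  qed
  have img1: "\<Phi> ` {M :: nat \<Rightarrow> nat \<Rightarrow> 'a. rref n k M \<and> extM k j v A M} \<subseteq> {M' :: nat \<Rightarrow> nat \<Rightarrow> 'a. rref (n - j) p M'}"
  proof (clarify)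
    fix M assume R: "rref n k M" and E: "extM k j v A M"
    note F = memb_facts[OF R E, folded p_def]
    have L: "\<And>t. t < p \<Longrightarrow> lead (\<Phi> M t) = lead (M t) - j"
    proof -
      fix t assume t: "t < p"
      have tk: "t < k" using t F(1) by simp
      show "lead (\<Phi> M t) = lead (M t) - j"
      proof (rule lead_eq)
        show "\<Phi> M t (lead (M t) - j) \<noteq> 0"
          unfolding \<Phi>_def using t F(2)[OF t] rref_facts(1,3)[OF R tk] by auto
        show "\<forall>i>lead (M t) - j. \<Phi> M t i = 0"
          unfolding \<Phi>_def using rref_facts(5)[OF R tk] F(2)[OF t] by auto
      qed
    qed
    show "rref (n - j) p (\<Phi> M)" unfolding rref_def
    proof (intro conjI allI impI)
      fix t i assume "p \<le> t \<or> i \<notin> {1..n - j}" then show "\<Phi> M t i = 0" unfolding \<Phi>_def by auto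
    next
      fix t assume t: "t < p"
      then have tk: "t < k" using F(1) by simp
      show "\<exists>i. \<Phi> M t i \<noteq> 0"
        using t F(2)[OF t] rref_facts(1,3)[OF R tk] unfolding \<Phi>_def
        by (intro exI[of _ "lead (M t) - j"]) auto
      show "\<Phi> M t (lead (\<Phi> M t)) = 1"
        using t F(2)[OF t] rref_facts(1,3)[OF R tk] unfolding L[OF t] unfolding \<Phi>_def by auto
    next
      fix s t assume st: "s < t \<and> t < p"
      then show "lead (\<Phi> M t) < lead (\<Phi> M s)"
        using L[of s] L[of t] F(2)[of s] F(2)[of t] rref_lead_mono[OF R, of s t] F(1) by auto
    next
      fix s t assume s: "s < p" and t: "t < p" and st: "s \<noteq> t"
      have sk: "s < k" and tk: "t < k" using s t F(1) by auto
      show "\<Phi> M s (lead (\<Phi> M t)) = 0"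
        unfolding L[OF t] unfolding \<Phi>_def
        using rref_facts(6)[OF R tk sk] st F(2)[OF t] rref_facts(3)[OF R tk] by auto
    qed
  qed
  have img2: "\<Psi> ` {M' :: nat \<Rightarrow> nat \<Rightarrow> 'a. rref (n - j) p M'} \<subseteq> {M :: nat \<Rightarrow> nat \<Rightarrow> 'a. rref n k M \<and> extM k j v A M}"
  proof
    fix N assume "N \<in> \<Psi> ` {M' :: nat \<Rightarrow> nat \<Rightarrow> 'a. rref (n - j) p M'}"
    then obtain M' where R': "rref (n - j) p M'" and N: "N = \<Psi> M'" by auto
    have row0: "\<And>t. p \<le> t \<Longrightarrow> \<Psi> M' t = M0 t" unfolding \<Psi>_def by auto
    have L: "\<And>t. t < p \<Longrightarrow> lead (\<Psi> M' t) = lead (M' t) + j"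
    proof -
      fix t assume t: "t < p"
      show "lead (\<Psi> M' t) = lead (M' t) + j"
      proof (rule lead_eq)
        show "\<Psi> M' t (lead (M' t) + j) \<noteq> 0"
          unfolding \<Psi>_def using t rref_facts(1,2)[OF R' t] by auto
        show "\<forall>i>lead (M' t) + j. \<Psi> M' t i = 0"
          unfolding \<Psi>_def using t rref_facts(5)[OF R' t] by auto
      qed
    qed
    have L2: "\<And>t. p \<le> t \<Longrightarrow> lead (\<Psi> M' t) = lead (M0 t)" using row0 by simp
    have lp: "\<And>t. t < p \<Longrightarrow> j < lead (\<Psi> M' t)" using L rref_facts(2)[OF R'] by fastforce
    have agree: "\<And>t i. i \<le> j \<Longrightarrow> \<Psi> M' t i = M0 t i" unfolding \<Psi>_def by auto
    have RR: "rref n k (\<Psi> M')" unfolding rref_def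
    proof (intro conjI allI impI)
      fix t i assume a: "k \<le> t \<or> i \<notin> {1..n}"
      show "\<Psi> M' t i = 0"
      proof (cases "t < p \<and> j < i")
        case True
        then have "\<not> i \<le> n" using a F0(1) by auto
        then have "i - j \<notin> {1..n - j}" using True j by auto
        then show ?thesis unfolding \<Psi>_def using True rref_zero[OF R', of t "i - j"] by auto
      next
        case False
        then show ?thesis unfolding \<Psi>_def using a rref_zero[OF R0, of t i] by auto
      qed
    next
      fix t assume t: "t < k"
      show "\<exists>i. \<Psi> M' t i \<noteq> 0"
      proof (cases "t < p")
        case True
        then show ?thesis unfolding \<Psi>_def using rref_facts(1,2)[OF R' True]
          by (intro exI[of _ "lead (M' t) + j"]) auto
      next
        case False
        then show ?thesis using row0[of t] rref_facts(1)[OF R0 t] by (intro exI[of _ "lead (M0 t)"]) auto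
      qed
      show "\<Psi> M' t (lead (\<Psi> M' t)) = 1"
      proof (cases "t < p")
        case True
        then show ?thesis unfolding L[OF True] unfolding \<Psi>_def using rref_facts(1,2)[OF R' True] by auto
      next
        case False
        then show ?thesis using row0[of t] rref_facts(1)[OF R0 t] by auto
      qed
    next
      fix s t assume st: "s < t \<and> t < k"
      show "lead (\<Psi> M' t) < lead (\<Psi> M' s)"
      proof (cases "t < p")
        case True
        then show ?thesis using st L[of s] L[of t] rref_lead_mono[OF R', of s t] by auto
      next
        case False
        show ?thesis
        proof (cases "s < p")
          case True
          then show ?thesis using lp[OF True] L2[of t] False F0(3)[of t] st by auto
        next
          case False
          then show ?thesis using \<open>\<not> t < p\<close> L2 rref_lead_mono[OF R0, of s t] st by auto
        qed
      qed
    next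
      fix s t assume s: "s < k" and t: "t < k" and st: "s \<noteq> t"
      show "\<Psi> M' s (lead (\<Psi> M' t)) = 0"
      proof (cases "t < p")
        case True
        show ?thesis
        proof (cases "s < p")
          case True
          then show ?thesis unfolding L[OF \<open>t < p\<close>] unfolding \<Psi>_def
            using rref_facts(6)[OF R' \<open>t < p\<close> True] st rref_facts(2)[OF R' \<open>t < p\<close>] by auto
        next
          case False
          then show ?thesis using row0[of s] lp[OF \<open>t < p\<close>] F0(4)[of s] by auto
        qed
      next
        case False
        then have "lead (\<Psi> M' t) \<le> j" using L2 F0(3)[of t] t by auto
        then show ?thesis using agree L2[of t] False rref_facts(6)[OF R0 t s] st by auto
      qed
    qed
    have EE: "extM k j v A (\<Psi> M')" unfolding extM_def
    proof
      fix i assume i: "i \<in> {1..j}"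
      have "(\<exists>t<k. lead (\<Psi> M' t) = i) \<longleftrightarrow> (\<exists>t<k. lead (M0 t) = i)"
      proof
        assume "\<exists>t<k. lead (\<Psi> M' t) = i"
        then obtain t where "t < k" "lead (\<Psi> M' t) = i" by blast
        then show "\<exists>t<k. lead (M0 t) = i" using lp[of t] L2[of t] i by (cases "t < p") auto
      next
        assume "\<exists>t<k. lead (M0 t) = i"
        then obtain t where "t < k" "lead (M0 t) = i" by blast
        then show "\<exists>t<k. lead (\<Psi> M' t) = i" using F0(2)[of t] L2[of t] i by (cases "t < p") auto
      qed
      moreover have "\<forall>t<k. \<Psi> M' t i = A t i" using agree F0(5) i by auto
      ultimately show "(if \<exists>t<k. lead (\<Psi> M' t) = i then 1 else 0) = v i \<and> (\<forall>t<k. \<Psi> M' t i = A t i)"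
        using E0 i unfolding extM_def by auto
    qed
    show "N \<in> {M :: nat \<Rightarrow> nat \<Rightarrow> 'a. rref n k M \<and> extM k j v A M}" using RR EE N by simp
  qed
  show ?thesis unfolding \<Phi>_def[symmetric] by (rule bij_betw_byWitness[OF left right img1 img2])
qed




theorem lemma3:
  fixes n k j :: nat and v :: "nat \<Rightarrow> nat" and A :: "nat \<Rightarrow> nat \<Rightarrow> 'a::{finite,field}"
  assumes "k \<le> n" and "1 \<le> j" and "j \<le> n"
    and "\<exists>Y\<in>(Grass n k :: (nat \<Rightarrow> 'a) set set). ext_first_cols n k j Y v A"
  shows "real (card {X\<in>(Grass n k :: (nat \<Rightarrow> 'a) set set). ext_first_cols n k j X v A})
         = qbinom (card (UNIV :: 'a set)) (n - j) (int k - int (\<Sum>l=1..j. v l))"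
proof -
  obtain Y where Y: "Y \<in> (Grass n k :: (nat \<Rightarrow> 'a) set set)" "ext_first_cols n k j Y v A" using assms(4) by blast
  obtain M0 :: "nat \<Rightarrow> nat \<Rightarrow> 'a" where M0: "rref n k M0" "row_span k M0 = Y" using Grass_rref[OF Y(1)] by blast
  have extiff: "\<And>M :: nat \<Rightarrow> nat \<Rightarrow> 'a. rref n k M \<Longrightarrow> ext_first_cols n k j (row_span k M) v A \<longleftrightarrow> extM k j v A M"
  proof -
    fix M :: "nat \<Rightarrow> nat \<Rightarrow> 'a" assume R: "rref n k M"
    show "ext_first_cols n k j (row_span k M) v A \<longleftrightarrow> extM k j v A M"
      unfolding ext_first_cols_def extM_def idv_def RE_rref[OF R] ..
  qed
  have E0: "extM k j v A M0" using extiff[OF M0(1)] Y(2) M0(2) by simp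
  define Ms where "Ms = {M :: nat \<Rightarrow> nat \<Rightarrow> 'a. rref n k M \<and> extM k j v A M}"
  have seteq: "{X\<in>(Grass n k :: (nat \<Rightarrow> 'a) set set). ext_first_cols n k j X v A} = row_span k ` Ms"
  proof
    show "{X\<in>(Grass n k :: (nat \<Rightarrow> 'a) set set). ext_first_cols n k j X v A} \<subseteq> row_span k ` Ms"
    proof
      fix X assume X: "X \<in> {X\<in>(Grass n k :: (nat \<Rightarrow> 'a) set set). ext_first_cols n k j X v A}"
      then have XG: "X \<in> (Grass n k :: (nat \<Rightarrow> 'a) set set)" and XE: "ext_first_cols n k j X v A" by auto
      obtain M :: "nat \<Rightarrow> nat \<Rightarrow> 'a" where M: "rref n k M" "row_span k M = X" using Grass_rref[OF XG] by blast
      have "extM k j v A M" using XE extiff[OF M(1)] M(2) by simp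
      then have "M \<in> Ms" using M(1) unfolding Ms_def by simp
      then show "X \<in> row_span k ` Ms" using M(2) by blast
    qed
    show "row_span k ` Ms \<subseteq> {X\<in>(Grass n k :: (nat \<Rightarrow> 'a) set set). ext_first_cols n k j X v A}"
    proof
      fix X assume "X \<in> row_span k ` Ms"
      then obtain M where M: "M \<in> Ms" "X = row_span k M" by blast
      then have R: "rref n k M" and E: "extM k j v A M" unfolding Ms_def by auto
      show "X \<in> {X\<in>(Grass n k :: (nat \<Rightarrow> 'a) set set). ext_first_cols n k j X v A}"
        using rref_Grass[OF R] extiff[OF R] E M(2) by simp
    qed
  qed
  have inj: "inj_on (row_span k) Ms"
  proof (rule inj_onI)
    fix M1 M2 assume a: "M1 \<in> Ms" "M2 \<in> Ms" "row_span k M1 = row_span k M2"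
    from a(1) have R1: "rref n k M1" unfolding Ms_def by simp
    from a(2) have R2: "rref n k M2" unfolding Ms_def by simp
    have "M1 = RE n k (row_span k M1)" by (rule RE_rref[OF R1, symmetric])
    also have "\<dots> = RE n k (row_span k M2)" using a(3) by simp
    also have "\<dots> = M2" by (rule RE_rref[OF R2])
    finally show "M1 = M2" .
  qed
  define P where "P = {i\<in>{1..j}. v i = 1}"
  define p where "p = k - card P"
  have bij: "bij_betw (\<lambda>M t i. if t < p \<and> 1 \<le> i \<and> i \<le> n - j then M t (i + j) else 0)
           Ms {M' :: nat \<Rightarrow> nat \<Rightarrow> 'a. rref (n - j) p M'}"
    using count_bij[OF M0(1) E0 assms(2,3)] unfolding Ms_def p_def P_def .
  have "card {X\<in>(Grass n k :: (nat \<Rightarrow> 'a) set set). ext_first_cols n k j X v A} = card Ms"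
    unfolding seteq by (rule card_image[OF inj])
  also have "\<dots> = card {M' :: nat \<Rightarrow> nat \<Rightarrow> 'a. rref (n - j) p M'}" by (rule bij_betw_same_card[OF bij])
  finally have c1: "real (card {X\<in>(Grass n k :: (nat \<Rightarrow> 'a) set set). ext_first_cols n k j X v A})
     = Gq (real (card (UNIV :: 'a set))) (n - j) p" using card_rref_Gq by simp
  have Pk: "card P \<le> k" using lead_split(1)[OF M0(1) E0] unfolding P_def .
  have v01: "\<And>l. l \<in> {1..j} \<Longrightarrow> v l = (if l \<in> P then 1 else 0)"
  proof -
    fix l assume l: "l \<in> {1..j}"
    have "(if \<exists>t<k. lead (M0 t) = l then 1 else 0) = v l" using E0 l unfolding extM_def by blast
    then have "v l = 0 \<or> v l = 1" by (auto split: if_splits)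
    then show "v l = (if l \<in> P then 1 else 0)" using l unfolding P_def by auto
  qed
  have "(\<Sum>l=1..j. v l) = (\<Sum>l=1..j. if l \<in> P then 1 else 0)" using v01 by (rule sum.cong[OF refl])
  also have "\<dots> = card P"
  proof -
    have "(\<Sum>l=1..j. if l \<in> P then (1::nat) else 0) = (\<Sum>l\<in>{l\<in>{1..j}. l \<in> P}. 1)"
      by (rule sum.inter_filter[symmetric]) simp
    also have "{l\<in>{1..j}. l \<in> P} = P" unfolding P_def by auto
    finally show ?thesis by simp
  qed
  finally have sv: "(\<Sum>l=1..j. v l) = card P" .
  have ip: "int k - int (\<Sum>l=1..j. v l) = int p" unfolding sv p_def using Pk by simp
  show ?thesis unfolding ip c1 using qbinom_Gq[OF card_UNIV_ge2[where 'a='a]] by simp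
qed


end
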